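(* Let $a,b,\alpha,\beta$ be complex numbers with $\beta a-\alpha b\neq0$, let $n\ge1$, and write $\Psi_r(m)=\Psi\left(\begin{array}{cc|c} a & b & m \\ \alpha & \beta & r \end{array}\right)$, $\Phi_r(m)=\Phi\left(\begin{array}{cc|c} a & b & m \\ \alpha & \beta & r \end{array}\right)$. Then for $0\le r\le\lfloor (n-1)/2\rfloor$, \[ \Phi_r(n)=\frac{(2\alpha-\beta)\big(\lfloor (n+1)/2\rfloor-r\big)\Psi_r(n+1)+(2a-b)(r+1)\Psi_{r+1}(n+1)}{(\beta a-\alpha b)(n+1)}. \]
   Context: $\delta(m)=1$ for $m$ odd, $0$ for $m$ even; $\lfloor\cdot\rfloor$ is the floor. For $m\ge1$ and numbers with $\beta a-\alpha b\ne0$, $\Psi\left(\begin{array}{cc|c} a & b & m \\ \alpha & \beta & r \end{array}\right)$ ($0\le r\le\lfloor m/2\rfloor$) and $\Phi\left(\begin{array}{cc|c} a & b & m \\ \alpha & \beta & r \end{array}\right)$ ($0\le r\le\lfloor (m-1)/2\rfloor$) are the unique numbers such that, identically in $x,y$, $(\beta a-\alpha b)^{\lfloor m/2\rfloor}\frac{x^m+y^m}{(x+y)^{\delta(m)}}=\sum_{r}\Psi\left(\begin{array}{cc|c} a & b & m \\ \alpha & \beta & r \end{array}\right)(\alpha x^2+\beta xy+\alpha y^2)^{\lfloor m/2\rfloor-r}(ax^2+bxy+ay^2)^r$ and $(\beta a-\alpha b)^{\lfloor (m-1)/2\rfloor}\frac{x^m-y^m}{(x-y)(x+y)^{\delta(m-1)}}=\sum_{r}\Phi\left(\begin{array}{cc|c}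 a & b & m \\ \alpha & \beta & r \end{array}\right)(\alpha x^2+\beta xy+\alpha y^2)^{\lfloor (m-1)/2\rfloor-r}(ax^2+bxy+ay^2)^r$. *)

theory Defs
  imports Complex_Main
begin

definition delta :: "nat \<Rightarrow> nat" where
  "delta m = (if odd m then 1 else 0)"

definition Psi :: "complex \<Rightarrow> complex \<Rightarrow> complex \<Rightarrow> complex \<Rightarrow> nat \<Rightarrow> nat \<Rightarrow> complex" where
  "Psi a b \<alpha> \<beta> m = (THE c. (\<forall>r. m div 2 < r \<longrightarrow> c r = 0) \<and>
     (\<forall>x y :: complex. (x + y) ^ delta m \<noteq> 0 \<longrightarrow>
        (\<beta> * a - \<alpha> * b) ^ (m div 2) * ((x ^ m + y ^ m) / (x + y) ^ delta m) =
        (\<Sum>r\<le>m div 2. c r * (\<alpha> * x^2 + \<beta> * x * y + \<alpha> * y^2) ^ (m div 2 - r)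
                              * (a * x^2 + b * x * y + a * y^2) ^ r)))"

definition Phi :: "complex \<Rightarrow> complex \<Rightarrow> complex \<Rightarrow> complex \<Rightarrow> nat \<Rightarrow> nat \<Rightarrow> complex" where
  "Phi a b \<alpha> \<beta> m = (THE c. (\<forall>r. (m - 1) div 2 < r \<longrightarrow> c r = 0) \<and>
     (\<forall>x y :: complex. (x - y) * (x + y) ^ delta (m - 1) \<noteq> 0 \<longrightarrow>
        (\<beta> * a - \<alpha> * b) ^ ((m - 1) div 2) * ((x ^ m - y ^ m) / ((x - y) * (x + y) ^ delta (m - 1))) =
        (\<Sum>r\<le>(m - 1) div 2. c r * (\<alpha> * x^2 + \<beta> * x * y + \<alpha> * y^2) ^ ((m - 1) div 2 - r)
                              * (a * x^2 + b * x * y + a * y^2) ^ r)))"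

end

theory Submission imports Defs begin

definition F :: "complex \<Rightarrow> complex \<Rightarrow> complex \<Rightarrow> complex \<Rightarrow> complex" where
  "F A B x y = A * x^2 + B * x * y + A * y^2"

definition hsum :: "nat \<Rightarrow> (nat \<Rightarrow> complex) \<Rightarrow> complex \<Rightarrow> complex \<Rightarrow> complex" where
  "hsum k c X Y = (\<Sum>r\<le>k. c r * X^(k-r) * Y^r)"

lemma finite_lin: "\<not> (A = 0 \<and> B = 0) \<Longrightarrow> finite {t::complex. A * t = B}"
proof (cases "A = 0")
  case True
  assume "\<not> (A = 0 \<and> B = 0)"
  then show ?thesis using True by simp
next
  case False
  then have "{t::complex. A * t = B} \<subseteq> {B / A}" by (auto simp: field_simps)
  then show ?thesis using finite_subset by blast
qed

lemma hit:
  assumes D: "\<beta> * a - \<alpha> * b \<noteq> 0"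
    and t1: "(\<beta> - 2*\<alpha>) * t \<noteq> b - 2*a" and t2: "(\<beta> + 2*\<alpha>) * t \<noteq> b + 2*a"
  shows "\<exists>x y. (x - y) * (x + y) \<noteq> 0 \<and> F \<alpha> \<beta> x y = 1 \<and> F a b x y = t"
proof -
  define D where "D = \<beta> * a - \<alpha> * b"
  define u where "u = (\<beta>*t - b) / D"
  define v where "v = (a - \<alpha>*t) / D"
  define s where "s = csqrt (u + 2*v)"
  define w where "w = csqrt (u - 2*v)"
  have s2: "s^2 = u + 2*v" unfolding s_def by simp
  have w2: "w^2 = u - 2*v" unfolding w_def by simp
  have D0: "D \<noteq> 0" using D D_def by simp
  have e1: "u + 2*v = ((\<beta> - 2*\<alpha>) * t - (b - 2*a)) / D" unfolding u_def v_def
    using D0 by (simp add: field_simps)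
  have "u + 2*v \<noteq> 0" unfolding e1 using t1 D0 by simp
  hence s0: "s \<noteq> 0" using s2 by auto
  have e2: "u - 2*v = ((\<beta> + 2*\<alpha>) * t - (b + 2*a)) / D" unfolding u_def v_def
    using D0 by (simp add: field_simps)
  have "u - 2*v \<noteq> 0" unfolding e2 using t2 D0 by simp
  hence w0: "w \<noteq> 0" using w2 by auto
  define x where "x = (s + w) / 2"
  define y where "y = (s - w) / 2"
  have xy1: "x^2 + y^2 = u" unfolding x_def y_def using s2 w2 by (simp add: field_simps power2_eq_square) 
  have xy2: "x * y = v" unfolding x_def y_def using s2 w2 by (simp add: field_simps power2_eq_square)
  have "(x - y) * (x + y) \<noteq> 0" unfolding x_def y_def using s0 w0 by (simp add: field_simps)
  moreover have "F \<alpha> \<beta> x y = 1"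
  proof -
    have "F \<alpha> \<beta> x y = \<alpha> * (x^2 + y^2) + \<beta> * (x*y)" unfolding F_def by algebra
    also have "\<dots> = (\<alpha> * (\<beta>*t - b) + \<beta> * (a - \<alpha>*t)) / D" unfolding xy1 xy2 u_def v_def
      by (simp add: add_divide_distrib)
    also have "\<alpha> * (\<beta>*t - b) + \<beta> * (a - \<alpha>*t) = D" unfolding D_def by algebra
    finally show ?thesis using D0 by simp
  qed
  moreover have "F a b x y = t"
  proof -
    have "F a b x y = a * (x^2 + y^2) + b * (x*y)" unfolding F_def by algebra
    also have "\<dots> = (a * (\<beta>*t - b) + b * (a - \<alpha>*t)) / D" unfolding xy1 xy2 u_def v_def
      by (simp add: add_divide_distrib)
    also have "a * (\<beta>*t - b) + b * (a - \<alpha>*t) = D * t" unfolding D_def by algebra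
    finally show ?thesis using D0 by simp
  qed
  ultimately show ?thesis by blast
qed

lemma uniq:
  assumes D: "\<beta> * a - \<alpha> * b \<noteq> 0"
    and H: "\<And>x y. (x - y) * (x + y) \<noteq> 0 \<Longrightarrow> hsum k d (F \<alpha> \<beta> x y) (F a b x y) = 0"
    and r: "r \<le> k"
  shows "d r = 0"
proof -
  define E where "E = {t. (\<beta> - 2*\<alpha>) * t = b - 2*a} \<union> {t. (\<beta> + 2*\<alpha>) * t = b + 2*a}"
  have f1: "finite {t. (\<beta> - 2*\<alpha>) * t = b - 2*a}"
  proof (rule finite_lin, rule notI)
    assume "\<beta> - 2 * \<alpha> = 0 \<and> b - 2 * a = 0"
    hence "\<beta> = 2*\<alpha>" "b = 2*a" by auto
    thus False using D by (simp add: algebra_simps)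
  qed
  have f2: "finite {t. (\<beta> + 2*\<alpha>) * t = b + 2*a}"
  proof (rule finite_lin, rule notI)
    assume "\<beta> + 2 * \<alpha> = 0 \<and> b + 2 * a = 0"
    hence "\<beta> = -2*\<alpha>" "b = -2*a" by (auto simp: algebra_simps eq_neg_iff_add_eq_0)
    thus False using D by (simp add: algebra_simps)
  qed
  have fE: "finite E" unfolding E_def using f1 f2 by simp
  have sub: "UNIV - E \<subseteq> {t. (\<Sum>i\<le>k. d i * t^i) = 0}"
  proof
    fix t assume "t \<in> UNIV - E"
    then obtain x y where xy: "(x - y) * (x + y) \<noteq> 0" "F \<alpha> \<beta> x y = 1" "F a b x y = t"
      using hit[OF D, of t] unfolding E_def by auto
    have "hsum k d 1 t = 0" using H[OF xy(1)] xy(2,3) by simp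
    thus "t \<in> {t. (\<Sum>i\<le>k. d i * t^i) = 0}" unfolding hsum_def by simp
  qed
  have "infinite (UNIV - E)" using fE infinite_UNIV_char_0[where 'a=complex] by (metis Diff_infinite_finite)
  hence "infinite {t. (\<Sum>i\<le>k. d i * t^i) = 0}" using sub finite_subset by blast
  thus ?thesis using polyfun_finite_roots[of d k] r by auto
qed

lemma uniq2:
  assumes D: "\<beta> * a - \<alpha> * b \<noteq> 0"
    and s1: "\<forall>r. k < r \<longrightarrow> c1 r = 0" and s2: "\<forall>r. k < r \<longrightarrow> c2 r = 0"
    and H: "\<And>x y. (x - y) * (x + y) \<noteq> 0 \<Longrightarrow>
       hsum k c1 (F \<alpha> \<beta> x y) (F a b x y) = hsum k c2 (F \<alpha> \<beta> x y) (F a b x y)"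
  shows "c1 = c2"
proof
  fix r
  show "c1 r = c2 r"
  proof (cases "r \<le> k")
    case True
    have "(\<lambda>r. c1 r - c2 r) r = 0"
    proof (rule uniq[OF D _ True])
      fix x y :: complex assume "(x - y) * (x + y) \<noteq> 0"
      from H[OF this] show "hsum k (\<lambda>r. c1 r - c2 r) (F \<alpha> \<beta> x y) (F a b x y) = 0"
        unfolding hsum_def by (simp add: algebra_simps sum_subtractf)
    qed
    thus ?thesis by simp
  next
    case False thus ?thesis using s1 s2 by auto
  qed
qed

definition HP :: "complex \<Rightarrow> complex \<Rightarrow> complex \<Rightarrow> complex \<Rightarrow> nat \<Rightarrow> (complex \<Rightarrow> complex \<Rightarrow> complex) \<Rightarrow> bool" where
  "HP a b \<alpha> \<beta> k f \<longleftrightarrow> (\<exists>c. (\<forall>r. k < r \<longrightarrow> c r = 0) \<and> (\<forall>x y. f x y = hsum k c (F \<alpha> \<beta> x y) (F a b x y)))"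

lemma HP_cong: "HP a b \<alpha> \<beta> k f \<Longrightarrow> (\<And>x y. f x y = g x y) \<Longrightarrow> HP a b \<alpha> \<beta> k g"
  unfolding HP_def by metis

lemma HP_const: "HP a b \<alpha> \<beta> 0 (\<lambda>x y. s)"
  unfolding HP_def hsum_def by (rule exI[of _ "\<lambda>r. if r = 0 then s else 0"]) auto

lemma HP_add: "HP a b \<alpha> \<beta> k f \<Longrightarrow> HP a b \<alpha> \<beta> k g \<Longrightarrow> HP a b \<alpha> \<beta> k (\<lambda>x y. f x y + g x y)"
proof -
  assume "HP a b \<alpha> \<beta> k f" "HP a b \<alpha> \<beta> k g"
  then obtain c1 c2 where c1: "\<forall>r. k < r \<longrightarrow> c1 r = 0" "\<forall>x y. f x y = hsum k c1 (F \<alpha> \<beta> x y) (F a b x y)"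
    and c2: "\<forall>r. k < r \<longrightarrow> c2 r = 0" "\<forall>x y. g x y = hsum k c2 (F \<alpha> \<beta> x y) (F a b x y)"
    unfolding HP_def by blast
  show ?thesis unfolding HP_def
    by (rule exI[of _ "\<lambda>r. c1 r + c2 r"]) (use c1 c2 in \<open>auto simp: hsum_def algebra_simps sum.distrib\<close>)
qed

lemma HP_scale: "HP a b \<alpha> \<beta> k f \<Longrightarrow> HP a b \<alpha> \<beta> k (\<lambda>x y. s * f x y)"
proof -
  assume "HP a b \<alpha> \<beta> k f"
  then obtain c1 where c1: "\<forall>r. k < r \<longrightarrow> c1 r = 0" "\<forall>x y. f x y = hsum k c1 (F \<alpha> \<beta> x y) (F a b x y)"
    unfolding HP_def by blast
  show ?thesis unfolding HP_def
    by (rule exI[of _ "\<lambda>r. s * c1 r"]) (use c1 in \<open>auto simp: hsum_def algebra_simps sum_distrib_left\<close>)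
qed

lemma hsum_mulX: "c (Suc k) = 0 \<Longrightarrow> hsum (Suc k) c X Y = X * hsum k c X Y"
proof -
  assume h: "c (Suc k) = 0"
  have "hsum (Suc k) c X Y = (\<Sum>r\<le>k. c r * X^(Suc k - r) * Y^r)"
    unfolding hsum_def using h by simp
  also have "\<dots> = (\<Sum>r\<le>k. X * (c r * X^(k - r) * Y^r))"
    by (rule sum.cong) (auto simp: Suc_diff_le)
  finally show ?thesis unfolding hsum_def by (simp add: sum_distrib_left)
qed

lemma hsum_mulY: "hsum (Suc k) (\<lambda>r. if r = 0 then 0 else c (r - 1)) X Y = Y * hsum k c X Y"
  unfolding hsum_def sum.atMost_Suc_shift by (simp add: sum_distrib_left algebra_simps)

lemma HP_mulP: "HP a b \<alpha> \<beta> k f \<Longrightarrow> HP a b \<alpha> \<beta> (Suc k) (\<lambda>x y. F \<alpha> \<beta> x y * f x y)"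
proof -
  assume "HP a b \<alpha> \<beta> k f"
  then obtain c1 where c1: "\<forall>r. k < r \<longrightarrow> c1 r = 0" "\<forall>x y. f x y = hsum k c1 (F \<alpha> \<beta> x y) (F a b x y)"
    unfolding HP_def by blast
  show ?thesis unfolding HP_def
    by (rule exI[of _ c1]) (use c1 in \<open>auto simp: hsum_mulX\<close>)
qed

lemma HP_mulQ: "HP a b \<alpha> \<beta> k f \<Longrightarrow> HP a b \<alpha> \<beta> (Suc k) (\<lambda>x y. F a b x y * f x y)"
proof -
  assume "HP a b \<alpha> \<beta> k f"
  then obtain c1 where c1: "\<forall>r. k < r \<longrightarrow> c1 r = 0" "\<forall>x y. f x y = hsum k c1 (F \<alpha> \<beta> x y) (F a b x y)"
    unfolding HP_def by blast
  show ?thesis unfolding HP_def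
    by (rule exI[of _ "\<lambda>r. if r = 0 then 0 else c1 (r - 1)"]) (use c1 in \<open>auto simp: hsum_mulY\<close>)
qed

lemma HP_lin: "HP a b \<alpha> \<beta> k f \<Longrightarrow>
  HP a b \<alpha> \<beta> (Suc k) (\<lambda>x y. (p * F \<alpha> \<beta> x y + q * F a b x y) * f x y)"
proof -
  assume h: "HP a b \<alpha> \<beta> k f"
  have "HP a b \<alpha> \<beta> (Suc k) (\<lambda>x y. p * (F \<alpha> \<beta> x y * f x y) + q * (F a b x y * f x y))"
    by (intro HP_add HP_scale HP_mulP HP_mulQ h)
  thus ?thesis by (rule HP_cong) (simp add: algebra_simps)
qed

fun T :: "nat \<Rightarrow> complex \<Rightarrow> complex \<Rightarrow> complex" where
  "T 0 x y = 2"
| "T (Suc 0) x y = 1"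
| "T (Suc (Suc 0)) x y = x^2 + y^2"
| "T (Suc (Suc (Suc 0))) x y = x^2 + y^2 - x * y"
| "T (Suc (Suc (Suc (Suc m)))) x y = (x^2 + y^2) * T (Suc (Suc m)) x y - (x * y)^2 * T m x y"

lemma delta_SS: "delta (Suc (Suc m)) = delta m"
  unfolding delta_def by simp

lemma T_eq: "(x + y) ^ delta m * T m x y = x ^ m + y ^ m"
proof (induction m x y rule: T.induct)
  case (1 x y) then show ?case by (simp add: delta_def)
next
  case (2 x y) then show ?case by (simp add: delta_def)
next
  case (3 x y) then show ?case by (simp add: delta_def numeral_2_eq_2)
next
  case (4 x y) then show ?case by (simp add: delta_def numeral_3_eq_3) algebra
next
  case (5 m x y)
  let ?e = "(x + y) ^ delta m"
  have "(x + y) ^ delta (Suc (Suc (Suc (Suc m)))) * T (Suc (Suc (Suc (Suc m)))) x y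
     = (x^2 + y^2) * (?e * T (Suc (Suc m)) x y) - (x*y)^2 * (?e * T m x y)"
    by (simp add: delta_SS algebra_simps)
  also have "\<dots> = (x^2 + y^2) * (x ^ Suc (Suc m) + y ^ Suc (Suc m)) - (x*y)^2 * (x^m + y^m)"
    using 5 by (simp add: delta_SS)
  also have "\<dots> = x ^ Suc (Suc (Suc (Suc m))) + y ^ Suc (Suc (Suc (Suc m)))"
    by (simp add: algebra_simps power2_eq_square)
  finally show ?case .
qed

lemma induct4[case_names 1 2 3 4 5]:
  assumes "P 0" "P (Suc 0)" "P (Suc (Suc 0))" "P (Suc (Suc (Suc 0)))"
    "\<And>m. P (Suc (Suc m)) \<Longrightarrow> P m \<Longrightarrow> P (Suc (Suc (Suc (Suc m))))"
  shows "P n"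
  using T.induct[of "\<lambda>m x y. P m" n 0 0] assms by blast

lemma T_HP:
  "HP a b \<alpha> \<beta> (m div 2) (\<lambda>x y. (\<beta> * a - \<alpha> * b) ^ (m div 2) * T m x y)"
proof (induction m rule: induct4)
  case 1
  show ?case by (simp add: HP_const)
next
  case 2
  show ?case by (simp add: HP_const)
next
  case 3
  have "HP a b \<alpha> \<beta> (Suc 0) (\<lambda>x y. (- b * F \<alpha> \<beta> x y + \<beta> * F a b x y) * 1)" (is "HP _ _ _ _ _ ?g")
    by (rule HP_lin[OF HP_const])
  note h = this
  have e: "Suc (Suc 0) div 2 = Suc 0" by simp
  show ?case unfolding e by (rule HP_cong[OF h]) (simp add: F_def algebra_simps)
next
  case 4
  have "HP a b \<alpha> \<beta> (Suc 0) (\<lambda>x y. ((- b - a) * F \<alpha> \<beta> x y + (\<beta> + \<alpha>) * F a b x y) * 1)" (is "HP _ _ _ _ _ ?g")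
    by (rule HP_lin[OF HP_const])
  note h = this
  have e: "Suc (Suc (Suc 0)) div 2 = Suc 0" by simp
  show ?case unfolding e by (rule HP_cong[OF h]) (simp add: F_def algebra_simps)
next
  case (5 m)
  define D where "D = \<beta> * a - \<alpha> * b"
  define k where "k = m div 2"
  have k2: "Suc (Suc m) div 2 = Suc k" "Suc (Suc (Suc (Suc m))) div 2 = Suc (Suc k)" unfolding k_def by auto
  have h1: "HP a b \<alpha> \<beta> (Suc k) (\<lambda>x y. D ^ Suc k * T (Suc (Suc m)) x y)"
    using 5(1) k2 unfolding D_def by simp
  have h0: "HP a b \<alpha> \<beta> k (\<lambda>x y. D ^ k * T m x y)"
    using 5(2) unfolding D_def k_def by simp
  have A: "HP a b \<alpha> \<beta> (Suc (Suc k)) (\<lambda>x y. (- b * F \<alpha> \<beta> x y + \<beta> * F a b x y) * (D ^ Suc k * T (Suc (Suc m)) x y))"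
    by (rule HP_lin[OF h1])
  have B: "HP a b \<alpha> \<beta> (Suc (Suc k)) (\<lambda>x y. (a * F \<alpha> \<beta> x y + (- \<alpha>) * F a b x y) * 
       ((a * F \<alpha> \<beta> x y + (- \<alpha>) * F a b x y) * (D ^ k * T m x y)))"
    by (rule HP_lin[OF HP_lin[OF h0]])
  have C: "HP a b \<alpha> \<beta> (Suc (Suc k)) (\<lambda>x y. (- b * F \<alpha> \<beta> x y + \<beta> * F a b x y) * (D ^ Suc k * T (Suc (Suc m)) x y)
     + (-1) * ((a * F \<alpha> \<beta> x y + (- \<alpha>) * F a b x y) * 
       ((a * F \<alpha> \<beta> x y + (- \<alpha>) * F a b x y) * (D ^ k * T m x y))))"
    by (rule HP_add[OF A HP_scale[OF B]])
  have e1: "- b * F \<alpha> \<beta> x y + \<beta> * F a b x y = D * (x^2 + y^2)" for x y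
    unfolding F_def D_def by algebra
  have e2: "a * F \<alpha> \<beta> x y + (- \<alpha>) * F a b x y = D * (x * y)" for x y
    unfolding F_def D_def by algebra
  show ?case unfolding k2 D_def[symmetric]
    by (rule HP_cong[OF C]) (simp only: e1 e2 T.simps, simp add: algebra_simps power2_eq_square)
qed

lemma sum_F: "(\<Sum>r\<le>k. c r * (\<alpha> * x^2 + \<beta> * x * y + \<alpha> * y^2) ^ (k - r)
                              * (a * x^2 + b * x * y + a * y^2) ^ r) = hsum k c (F \<alpha> \<beta> x y) (F a b x y)"
  by (simp add: hsum_def F_def)

lemma Psi_alt: "Psi a b \<alpha> \<beta> m = (THE c. (\<forall>r. m div 2 < r \<longrightarrow> c r = 0) \<and>
     (\<forall>x y :: complex. (x + y) ^ delta m \<noteq> 0 \<longrightarrow>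
        (\<beta> * a - \<alpha> * b) ^ (m div 2) * ((x ^ m + y ^ m) / (x + y) ^ delta m) =
        hsum (m div 2) c (F \<alpha> \<beta> x y) (F a b x y)))"
  unfolding Psi_def sum_F ..

lemma Phi_alt: "Phi a b \<alpha> \<beta> m = (THE c. (\<forall>r. (m - 1) div 2 < r \<longrightarrow> c r = 0) \<and>
     (\<forall>x y :: complex. (x - y) * (x + y) ^ delta (m - 1) \<noteq> 0 \<longrightarrow>
        (\<beta> * a - \<alpha> * b) ^ ((m - 1) div 2) * ((x ^ m - y ^ m) / ((x - y) * (x + y) ^ delta (m - 1))) =
        hsum ((m - 1) div 2) c (F \<alpha> \<beta> x y) (F a b x y)))"
  unfolding Phi_def sum_F ..

lemma Psi_spec:
  assumes D: "\<beta> * a - \<alpha> * b \<noteq> 0"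
  shows "(\<forall>r. m div 2 < r \<longrightarrow> Psi a b \<alpha> \<beta> m r = 0) \<and>
     (\<forall>x y :: complex. (x + y) ^ delta m \<noteq> 0 \<longrightarrow>
        (\<beta> * a - \<alpha> * b) ^ (m div 2) * ((x ^ m + y ^ m) / (x + y) ^ delta m) =
        hsum (m div 2) (Psi a b \<alpha> \<beta> m) (F \<alpha> \<beta> x y) (F a b x y))"
proof -
  obtain c where c: "\<forall>r. m div 2 < r \<longrightarrow> c r = 0"
    "\<forall>x y. (\<beta> * a - \<alpha> * b) ^ (m div 2) * T m x y = hsum (m div 2) c (F \<alpha> \<beta> x y) (F a b x y)"
    using T_HP[of a b \<alpha> \<beta> m] unfolding HP_def by blast
  have P: "(x + y) ^ delta m \<noteq> 0 \<Longrightarrow> (x ^ m + y ^ m) / (x + y) ^ delta m = T m x y" for x y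
    using T_eq[of x y m] by (simp add: field_simps)
  have ex1: "\<exists>!c. (\<forall>r. m div 2 < r \<longrightarrow> c r = 0) \<and>
     (\<forall>x y :: complex. (x + y) ^ delta m \<noteq> 0 \<longrightarrow>
        (\<beta> * a - \<alpha> * b) ^ (m div 2) * ((x ^ m + y ^ m) / (x + y) ^ delta m) =
        hsum (m div 2) c (F \<alpha> \<beta> x y) (F a b x y))"
  proof (rule ex1I)
    show "(\<forall>r. m div 2 < r \<longrightarrow> c r = 0) \<and>
     (\<forall>x y :: complex. (x + y) ^ delta m \<noteq> 0 \<longrightarrow>
        (\<beta> * a - \<alpha> * b) ^ (m div 2) * ((x ^ m + y ^ m) / (x + y) ^ delta m) =
        hsum (m div 2) c (F \<alpha> \<beta> x y) (F a b x y))"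
      using c P by auto
  next
    fix c2 assume c2: "(\<forall>r. m div 2 < r \<longrightarrow> c2 r = 0) \<and>
     (\<forall>x y :: complex. (x + y) ^ delta m \<noteq> 0 \<longrightarrow>
        (\<beta> * a - \<alpha> * b) ^ (m div 2) * ((x ^ m + y ^ m) / (x + y) ^ delta m) =
        hsum (m div 2) c2 (F \<alpha> \<beta> x y) (F a b x y))"
    show "c2 = c"
    proof (rule uniq2[OF D])
      fix x y :: complex assume "(x - y) * (x + y) \<noteq> 0"
      hence "(x + y) ^ delta m \<noteq> 0" by auto
      thus "hsum (m div 2) c2 (F \<alpha> \<beta> x y) (F a b x y) = hsum (m div 2) c (F \<alpha> \<beta> x y) (F a b x y)"
        using c c2 P by metis
    qed (use c c2 in auto)
  qed
  show ?thesis unfolding Psi_alt by (rule theI'[OF ex1])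
qed

lemma Phi_eq:
  assumes D: "\<beta> * a - \<alpha> * b \<noteq> 0"
    and d: "\<forall>r. (m - 1) div 2 < r \<longrightarrow> d r = 0"
    "\<forall>x y :: complex. (x - y) * (x + y) ^ delta (m - 1) \<noteq> 0 \<longrightarrow>
        (\<beta> * a - \<alpha> * b) ^ ((m - 1) div 2) * ((x ^ m - y ^ m) / ((x - y) * (x + y) ^ delta (m - 1))) =
        hsum ((m - 1) div 2) d (F \<alpha> \<beta> x y) (F a b x y)"
  shows "Phi a b \<alpha> \<beta> m = d"
  unfolding Phi_alt
proof (rule the_equality)
  show "(\<forall>r. (m - 1) div 2 < r \<longrightarrow> d r = 0) \<and>
     (\<forall>x y :: complex. (x - y) * (x + y) ^ delta (m - 1) \<noteq> 0 \<longrightarrow>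
        (\<beta> * a - \<alpha> * b) ^ ((m - 1) div 2) * ((x ^ m - y ^ m) / ((x - y) * (x + y) ^ delta (m - 1))) =
        hsum ((m - 1) div 2) d (F \<alpha> \<beta> x y) (F a b x y))" using d by blast
next
  fix c2 assume c2: "(\<forall>r. (m - 1) div 2 < r \<longrightarrow> c2 r = 0) \<and>
     (\<forall>x y :: complex. (x - y) * (x + y) ^ delta (m - 1) \<noteq> 0 \<longrightarrow>
        (\<beta> * a - \<alpha> * b) ^ ((m - 1) div 2) * ((x ^ m - y ^ m) / ((x - y) * (x + y) ^ delta (m - 1))) =
        hsum ((m - 1) div 2) c2 (F \<alpha> \<beta> x y) (F a b x y))"
  show "c2 = d"
  proof (rule uniq2[OF D])
    fix x y :: complex assume "(x - y) * (x + y) \<noteq> 0"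
    hence "(x - y) * (x + y) ^ delta (m - 1) \<noteq> 0" by auto
    thus "hsum ((m - 1) div 2) c2 (F \<alpha> \<beta> x y) (F a b x y) = hsum ((m - 1) div 2) d (F \<alpha> \<beta> x y) (F a b x y)"
      using d c2 by metis
  qed (use d c2 in auto)
qed

lemma deriv_hsum:
  assumes p: "(p has_field_derivative p') (at t)" and q: "(q has_field_derivative q') (at t)"
  shows "((\<lambda>t. hsum k c (p t) (q t)) has_field_derivative
    (\<Sum>r\<le>k. c r * (of_nat (k - r) * (p' * p t ^ (k - r - Suc 0)) * q t ^ r
       + p t ^ (k - r) * (of_nat r * (q' * q t ^ (r - Suc 0)))))) (at t)"
  unfolding hsum_def
proof (rule DERIV_sum)
  fix r
  have h: "((\<lambda>t. c r * (p t ^ (k - r) * q t ^ r)) has_field_derivative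
     c r * (of_nat (k - r) * (p' * p t ^ (k - r - Suc 0)) * q t ^ r
       + of_nat r * (q' * q t ^ (r - Suc 0)) * p t ^ (k - r))) (at t)"
    by (rule DERIV_cmult[OF DERIV_mult[OF DERIV_power[OF p, where n="k-r"] DERIV_power[OF q, where n=r]]])
  have ef: "(\<lambda>t. c r * (p t ^ (k - r) * q t ^ r)) = (\<lambda>t. c r * p t ^ (k - r) * q t ^ r)"
    by (simp add: mult.assoc)
  show "((\<lambda>t. c r * p t ^ (k - r) * q t ^ r) has_field_derivative
     c r * (of_nat (k - r) * (p' * p t ^ (k - r - Suc 0)) * q t ^ r
       + p t ^ (k - r) * (of_nat r * (q' * q t ^ (r - Suc 0))))) (at t)"
    using h unfolding ef by (rule DERIV_cong) (simp only: mult_ac)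
qed

lemma reindex:
  fixes c :: "nat \<Rightarrow> complex" and P Q p' q' :: complex
  shows
  "(\<Sum>r\<le>Suc j. c r * (of_nat (Suc j - r) * (p' * P ^ (Suc j - r - Suc 0)) * Q ^ r
       + P ^ (Suc j - r) * (of_nat r * (q' * Q ^ (r - Suc 0)))))
   = (\<Sum>r\<le>j. (p' * of_nat (Suc j - r) * c r + q' * of_nat (Suc r) * c (Suc r)) * P ^ (j - r) * Q ^ r)"
proof -
  have A: "(\<Sum>r\<le>Suc j. c r * (of_nat (Suc j - r) * (p' * P ^ (Suc j - r - Suc 0)) * Q ^ r))
     = (\<Sum>r\<le>j. p' * of_nat (Suc j - r) * c r * P ^ (j - r) * Q ^ r)"
    by (simp add: sum.atMost_Suc) (intro sum.cong refl; simp only: mult_ac)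
  have B: "(\<Sum>r\<le>Suc j. c r * (P ^ (Suc j - r) * (of_nat r * (q' * Q ^ (r - Suc 0)))))
     = (\<Sum>r\<le>j. q' * of_nat (Suc r) * c (Suc r) * P ^ (j - r) * Q ^ r)"
    by (subst sum.atMost_Suc_shift) (simp del: sum.atMost_Suc of_nat_Suc, intro sum.cong refl; simp only: mult_ac)
  show ?thesis
    unfolding distrib_left sum.distrib A B
    by (simp only: sum.distrib[symmetric]) (intro sum.cong refl; simp only: distrib_right)
qed

theorem theorem12p1:
  fixes a b \<alpha> \<beta> :: complex and n r :: nat
  assumes "\<beta> * a - \<alpha> * b \<noteq> 0" and "n \<ge> 1" and "r \<le> (n - 1) div 2"
  shows "Phi a b \<alpha> \<beta> n r =
    ((2 * \<alpha> - \<beta>) * of_nat ((n + 1) div 2 - r) * Psi a b \<alpha> \<beta> (n + 1) r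
     + (2 * a - b) * of_nat (r + 1) * Psi a b \<alpha> \<beta> (n + 1) (r + 1))
    / ((\<beta> * a - \<alpha> * b) * of_nat (n + 1))"
proof -
  define D where "D = \<beta> * a - \<alpha> * b"
  have D0: "D \<noteq> 0" using assms(1) D_def by simp
  define j where "j = (n - 1) div 2"
  define k where "k = (n + 1) div 2"
  have kj: "k = Suc j" using assms(2) unfolding k_def j_def by presburger
  define e where "e = delta (n + 1)"
  have e': "delta (n - 1) = e" unfolding e_def delta_def using assms(2) by (cases n) auto
  define c where "c = Psi a b \<alpha> \<beta> (n + 1)"
  have cs: "\<And>x y. (x + y) ^ e \<noteq> 0 \<Longrightarrow>
        D ^ k * ((x ^ (n + 1) + y ^ (n + 1)) / (x + y) ^ e) = hsum k c (F \<alpha> \<beta> x y) (F a b x y)"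
    using Psi_spec[OF assms(1), of "n + 1"] unfolding k_def[symmetric] c_def[symmetric] e_def[symmetric] D_def[symmetric]
    by blast
  define d where "d r = (if r \<le> j then ((2 * \<alpha> - \<beta>) * of_nat (k - r) * c r
     + (2 * a - b) * of_nat (r + 1) * c (r + 1)) / (D * of_nat (n + 1)) else 0)" for r
  have "Phi a b \<alpha> \<beta> n = d"
  proof (rule Phi_eq[OF assms(1)])
    show "\<forall>r. (n - 1) div 2 < r \<longrightarrow> d r = 0" unfolding d_def j_def by auto
    show "\<forall>x y. (x - y) * (x + y) ^ delta (n - 1) \<noteq> 0 \<longrightarrow>
        (\<beta> * a - \<alpha> * b) ^ ((n - 1) div 2) * ((x ^ n - y ^ n) / ((x - y) * (x + y) ^ delta (n - 1))) =
        hsum ((n - 1) div 2) d (F \<alpha> \<beta> x y) (F a b x y)"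
      unfolding e' j_def[symmetric] D_def[symmetric]
    proof (intro allI impI)
      fix x y :: complex
      assume nz: "(x - y) * (x + y) ^ e \<noteq> 0"
      have nz1: "x - y \<noteq> 0" and nz2: "(x + y) ^ e \<noteq> 0" using nz by auto
      define p where "p = (\<lambda>t. F \<alpha> \<beta> (x + t) (y - t))"
      define q where "q = (\<lambda>t. F a b (x + t) (y - t))"
      define P where "P = F \<alpha> \<beta> x y"
      define Q where "Q = F a b x y"
      define p' where "p' = (2 * \<alpha> - \<beta>) * (x - y)"
      define q' where "q' = (2 * a - b) * (x - y)"
      have fun_eq: "(\<lambda>t. D ^ k * (((x + t) ^ (n + 1) + (y - t) ^ (n + 1)) / (x + y) ^ e))
          = (\<lambda>t. hsum k c (p t) (q t))"
      proof
        fix t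
        have "x + t + (y - t) = x + y" by simp
        then show "D ^ k * (((x + t) ^ (n + 1) + (y - t) ^ (n + 1)) / (x + y) ^ e) = hsum k c (p t) (q t)"
          using cs[of "x + t" "y - t"] nz2 unfolding p_def q_def by simp
      qed
      have dp: "(p has_field_derivative p') (at 0)"
        unfolding p_def F_def p'_def by (auto intro!: derivative_eq_intros simp: algebra_simps)
      have dq: "(q has_field_derivative q') (at 0)"
        unfolding q_def F_def q'_def by (auto intro!: derivative_eq_intros simp: algebra_simps)
      have dH: "((\<lambda>t. hsum k c (p t) (q t)) has_field_derivative
          (\<Sum>r\<le>j. (p' * of_nat (Suc j - r) * c r + q' * of_nat (Suc r) * c (Suc r)) * P ^ (j - r) * Q ^ r)) (at 0)"
        using deriv_hsum[OF dp dq, of k c] unfolding kj reindex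
        by (simp add: p_def q_def P_def Q_def)
      have dG: "((\<lambda>t. D ^ k * (((x + t) ^ (n + 1) + (y - t) ^ (n + 1)) / (x + y) ^ e)) has_field_derivative
          D ^ k * ((of_nat (n + 1) * x ^ n - of_nat (n + 1) * y ^ n) / (x + y) ^ e)) (at 0)"
      proof -
        have inner: "((\<lambda>t. (x + t) ^ (n + 1) + (y - t) ^ (n + 1)) has_field_derivative
            of_nat (n + 1) * x ^ n - of_nat (n + 1) * y ^ n) (at 0)"
        proof -
          have d1: "((\<lambda>t. x + t) has_field_derivative 1) (at 0)"
            by (auto intro!: derivative_eq_intros)
          have d2: "((\<lambda>t. y - t) has_field_derivative -1) (at 0)"
            by (auto intro!: derivative_eq_intros)
          have "((\<lambda>t. (x + t) ^ Suc n + (y - t) ^ Suc n) has_field_derivative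
             (1 + of_nat n) * (1 * (x + 0) ^ n) + (1 + of_nat n) * (-1 * (y - 0) ^ n)) (at 0)"
            by (rule DERIV_add[OF DERIV_power_Suc[OF d1] DERIV_power_Suc[OF d2]])
          hence "((\<lambda>t. (x + t) ^ Suc n + (y - t) ^ Suc n) has_field_derivative
             of_nat (n + 1) * x ^ n - of_nat (n + 1) * y ^ n) (at 0)"
            by (rule DERIV_cong) (simp add: algebra_simps)
          thus ?thesis by simp
        qed
        show ?thesis by (rule DERIV_cmult[OF DERIV_cdivide[OF inner]])
      qed
      have eq1: "D ^ k * ((of_nat (n + 1) * x ^ n - of_nat (n + 1) * y ^ n) / (x + y) ^ e)
          = (\<Sum>r\<le>j. (p' * of_nat (Suc j - r) * c r + q' * of_nat (Suc r) * c (Suc r)) * P ^ (j - r) * Q ^ r)"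
        using DERIV_unique[OF dG dH[folded fun_eq]] .
      have eq2: "(\<Sum>r\<le>j. (p' * of_nat (Suc j - r) * c r + q' * of_nat (Suc r) * c (Suc r)) * P ^ (j - r) * Q ^ r)
          = (x - y) * D * of_nat (n + 1) * hsum j d P Q"
        unfolding hsum_def sum_distrib_left
      proof (rule sum.cong[OF refl])
        fix r assume "r \<in> {..j}"
        hence "r \<le> j" by simp
        thus "(p' * of_nat (Suc j - r) * c r + q' * of_nat (Suc r) * c (Suc r)) * P ^ (j - r) * Q ^ r
            = (x - y) * D * of_nat (n + 1) * (d r * P ^ (j - r) * Q ^ r)"
        proof -
          assume rj: "r \<le> j"
          define X where "X = (2 * \<alpha> - \<beta>) * of_nat (Suc j - r) * c r + (2 * a - b) * of_nat (r + 1) * c (r + 1)"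
          define N where "N = D * of_nat (n + 1)"
          have N1: "of_nat (n + 1) \<noteq> (0::complex)" using of_nat_neq_0[of n, where 'a=complex] by simp
          have N0: "N \<noteq> 0" using D0 N1 unfolding N_def by simp
          have dr: "d r = X / N" unfolding d_def X_def N_def using rj kj by simp
          have "(x - y) * D * of_nat (n + 1) * (d r * P ^ (j - r) * Q ^ r) = (x - y) * (N * (X / N)) * P ^ (j - r) * Q ^ r"
            unfolding dr N_def by (simp only: mult_ac)
          also have "\<dots> = (x - y) * X * P ^ (j - r) * Q ^ r" using N0 by simp
          also have "(x - y) * X = p' * of_nat (Suc j - r) * c r + q' * of_nat (Suc r) * c (Suc r)"
            unfolding X_def p'_def q'_def by (simp add: algebra_simps)
          finally show ?thesis by (rule sym)
        qed
      qed
      have "D * D ^ j * (of_nat (n + 1) * (x ^ n - y ^ n)) / (x + y) ^ e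
          = (x - y) * D * of_nat (n + 1) * hsum j d P Q"
        using eq1 eq2 unfolding kj by (simp add: algebra_simps)
      hence h1: "(D * of_nat (n + 1)) * (D ^ j * (x ^ n - y ^ n) / (x + y) ^ e)
          = (D * of_nat (n + 1)) * ((x - y) * hsum j d P Q)"
        by (simp add: algebra_simps)
      have N1: "of_nat (n + 1) \<noteq> (0::complex)" using of_nat_neq_0[of n, where 'a=complex] by simp
      have NN: "D * of_nat (n + 1) \<noteq> 0" using D0 N1 by simp
      have h2: "D ^ j * (x ^ n - y ^ n) / (x + y) ^ e = (x - y) * hsum j d P Q"
        using h1 mult_left_cancel[OF NN] by blast
      have "D ^ j * ((x ^ n - y ^ n) / ((x - y) * (x + y) ^ e)) = (D ^ j * (x ^ n - y ^ n) / (x + y) ^ e) / (x - y)"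
        by (simp add: field_simps)
      also have "\<dots> = hsum j d P Q" unfolding h2 using nz1 by simp
      finally show "D ^ j * ((x ^ n - y ^ n) / ((x - y) * (x + y) ^ e)) = hsum j d (F \<alpha> \<beta> x y) (F a b x y)"
        unfolding P_def Q_def .
    qed
  qed
  then show ?thesis using assms(3) unfolding d_def j_def k_def D_def c_def by simp
qed

end
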